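(* Let $A\in\{0,1\}^{m\times m}$ and $B\in\{0,1\}^{n\times n}$ be non-degenerate and let $\varphi:X_A\to X_B$ be an elementary conjugacy. Define $R_\varphi\in\{0,1\}^{m\times n}$ and $S_\varphi\in\{0,1\}^{n\times m}$ by $(R_\varphi)_{a,b}=1$ iff there is $a'$ with $\varphi_{\mathrm{loc}}(a,a')=b$, and $(S_\varphi)_{b,a}=1$ iff there is $b'$ with $\varphi^{-1}_{\mathrm{loc}}(b,b')=a$. Then $R_\varphi S_\varphi=A$ and $S_\varphi R_\varphi=B$.
   Context: A matrix is non-degenerate if it has no zero rows or columns; products are integer matrix products. $X_A=\{x\in\{1,\dots,m\}^{\mathbb Z}:A_{x_\ell,x_{\ell+1}}=1\ \forall\ell\}$ with the left shift. A conjugacy is a shift-commuting homeomorphism. A conjugacy $\varphi:X_A\to X_B$ is elementary if there are maps $\varphi_{\mathrm{loc}}$ (on pairs $(a,a')$ with $A_{a,a'}=1$) and $\varphi^{-1}_{\mathrm{loc}}$ (on pairs $(b,b')$ with $B_{b,b'}=1$) such that $\varphi(x)_i=\varphi_{\mathrm{loc}}(x_i,x_{i+1})$ and $\varphi^{-1}(y)_i=\varphi^{-1}_{\mathrm{loc}}(y_{i-1},y_i)$ for all $x,y,i$; the existential quantifiers above range over such allowed pairs. *)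

theory Defs
  imports "HOL-Analysis.Analysis"
begin

text \<open>Square/rectangular matrices are functions nat => nat => int, indexed from 1.
  Symbols are 1..m. Points of the shift space are functions int => nat,
  carrying the product topology (Function_Topology) of discrete nat.\<close>

definition zero_one_matrix :: "nat \<Rightarrow> nat \<Rightarrow> (nat \<Rightarrow> nat \<Rightarrow> int) \<Rightarrow> bool" where
  "zero_one_matrix m n A \<longleftrightarrow> (\<forall>i\<in>{1..m}. \<forall>j\<in>{1..n}. A i j = 0 \<or> A i j = 1)"

definition nondegenerate :: "nat \<Rightarrow> (nat \<Rightarrow> nat \<Rightarrow> int) \<Rightarrow> bool" where
  "nondegenerate m A \<longleftrightarrow>
     (\<forall>i\<in>{1..m}. \<exists>j\<in>{1..m}. A i j \<noteq> 0) \<and> (\<forall>j\<in>{1..m}. \<exists>i\<in>{1..m}. A i j \<noteq> 0)"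

definition mat_mult :: "nat \<Rightarrow> (nat \<Rightarrow> nat \<Rightarrow> int) \<Rightarrow> (nat \<Rightarrow> nat \<Rightarrow> int) \<Rightarrow> nat \<Rightarrow> nat \<Rightarrow> int" where
  "mat_mult k R S i j = (\<Sum>l=1..k. R i l * S l j)"

definition shift_space :: "nat \<Rightarrow> (nat \<Rightarrow> nat \<Rightarrow> int) \<Rightarrow> (int \<Rightarrow> nat) set" where
  "shift_space m A = {x. (\<forall>i. x i \<in> {1..m}) \<and> (\<forall>l. A (x l) (x (l + 1)) = 1)}"

definition shift :: "(int \<Rightarrow> nat) \<Rightarrow> (int \<Rightarrow> nat)" where
  "shift x = (\<lambda>i. x (i + 1))"

definition conjugacy ::
  "nat \<Rightarrow> (nat \<Rightarrow> nat \<Rightarrow> int) \<Rightarrow> nat \<Rightarrow> (nat \<Rightarrow> nat \<Rightarrow> int) \<Rightarrow>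
   ((int \<Rightarrow> nat) \<Rightarrow> (int \<Rightarrow> nat)) \<Rightarrow> ((int \<Rightarrow> nat) \<Rightarrow> (int \<Rightarrow> nat)) \<Rightarrow> bool" where
  "conjugacy m A n B \<phi> \<psi> \<longleftrightarrow>
     homeomorphism (shift_space m A) (shift_space n B) \<phi> \<psi> \<and>
     (\<forall>x\<in>shift_space m A. \<phi> (shift x) = shift (\<phi> x))"

definition elementary_with ::
  "nat \<Rightarrow> (nat \<Rightarrow> nat \<Rightarrow> int) \<Rightarrow> nat \<Rightarrow> (nat \<Rightarrow> nat \<Rightarrow> int) \<Rightarrow>
   ((int \<Rightarrow> nat) \<Rightarrow> (int \<Rightarrow> nat)) \<Rightarrow> ((int \<Rightarrow> nat) \<Rightarrow> (int \<Rightarrow> nat)) \<Rightarrow>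
   (nat \<Rightarrow> nat \<Rightarrow> nat) \<Rightarrow> (nat \<Rightarrow> nat \<Rightarrow> nat) \<Rightarrow> bool" where
  "elementary_with m A n B \<phi> \<psi> loc locinv \<longleftrightarrow>
     conjugacy m A n B \<phi> \<psi> \<and>
     (\<forall>x\<in>shift_space m A. \<forall>i. \<phi> x i = loc (x i) (x (i + 1))) \<and>
     (\<forall>y\<in>shift_space n B. \<forall>i. \<psi> y i = locinv (y (i - 1)) (y i))"

definition R_mat :: "nat \<Rightarrow> (nat \<Rightarrow> nat \<Rightarrow> int) \<Rightarrow> (nat \<Rightarrow> nat \<Rightarrow> nat) \<Rightarrow> nat \<Rightarrow> nat \<Rightarrow> int" where
  "R_mat m A loc a b = (if \<exists>a'\<in>{1..m}. A a a' = 1 \<and> loc a a' = b then 1 else 0)"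

definition S_mat :: "nat \<Rightarrow> (nat \<Rightarrow> nat \<Rightarrow> int) \<Rightarrow> (nat \<Rightarrow> nat \<Rightarrow> nat) \<Rightarrow> nat \<Rightarrow> nat \<Rightarrow> int" where
  "S_mat n B locinv b a = (if \<exists>b'\<in>{1..n}. B b b' = 1 \<and> locinv b b' = a then 1 else 0)"

end

theory Submission
  imports Defs
begin

lemma ext0:
  assumes zo: "zero_one_matrix m m A" and nd: "nondegenerate m A"
    and a: "a \<in> {1..m}" "a' \<in> {1..m}" and aa: "A a a' = 1"
  shows "\<exists>x\<in>shift_space m A. x 0 = a \<and> x 1 = a'"
proof -
  have succ: "\<forall>c\<in>{1..m}. \<exists>d\<in>{1..m}. A c d = 1"
    using nd zo unfolding nondegenerate_def zero_one_matrix_def by metis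
  have pred: "\<forall>d\<in>{1..m}. \<exists>c\<in>{1..m}. A c d = 1"
    using nd zo unfolding nondegenerate_def zero_one_matrix_def by metis
  obtain s where s: "\<forall>c\<in>{1..m}. s c \<in> {1..m} \<and> A c (s c) = 1"
    using succ by metis
  obtain p where p: "\<forall>c\<in>{1..m}. p c \<in> {1..m} \<and> A (p c) c = 1"
    using pred by metis
  have fs: "(s ^^ k) a' \<in> {1..m}" for k
    by (induction k) (use s a in auto)
  have gp: "(p ^^ k) a \<in> {1..m}" for k
    by (induction k) (use p a in auto)
  define x where "x i = (if i \<ge> 1 then (s ^^ nat (i-1)) a' else (p ^^ nat (-i)) a)" for i :: int
  have "x \<in> shift_space m A"
    unfolding shift_space_def
  proof (intro CollectI conjI allI)
    fix i show "x i \<in> {1..m}" unfolding x_def using fs gp by auto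
  next
    fix l :: int
    consider "l \<ge> 1" | "l = 0" | "l < 0" by linarith
    then show "A (x l) (x (l + 1)) = 1"
    proof cases
      case 1
      then have "nat (l + 1 - 1) = Suc (nat (l - 1))" by simp
      then have "x (l+1) = s (x l)" unfolding x_def using 1 by simp
      then show ?thesis using s fs[of "nat (l-1)"] 1 unfolding x_def by simp
    next
      case 2 then show ?thesis unfolding x_def using aa by simp
    next
      case 3
      then have "nat (- l) = Suc (nat (-(l+1)))" by simp
      then have "x l = p (x (l+1))" unfolding x_def using 3 by simp
      then show ?thesis using p gp[of "nat (-(l+1))"] 3 unfolding x_def by simp
    qed
  qed
  moreover have "x 0 = a \<and> x 1 = a'" unfolding x_def by simp
  ultimately show ?thesis by blast
qed

lemma ext:
  assumes zo: "zero_one_matrix m m A" and nd: "nondegenerate m A"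
    and a: "a \<in> {1..m}" "a' \<in> {1..m}" and aa: "A a a' = 1"
  shows "\<exists>x\<in>shift_space m A. x k = a \<and> x (k+1) = a'"
proof -
  obtain x where x: "x \<in> shift_space m A" "x 0 = a" "x 1 = a'"
    using ext0[OF assms] by blast
  define z where "z i = x (i - k)" for i
  have "z \<in> shift_space m A" using x(1) unfolding shift_space_def z_def
    by (auto simp: algebra_simps) (metis add.commute diff_add_eq)
  moreover have "z k = a \<and> z (k+1) = a'" using x unfolding z_def by simp
  ultimately show ?thesis by blast
qed

lemma glue:
  assumes "x \<in> shift_space m A" "x' \<in> shift_space m A" "x k = x' k"
  shows "(\<lambda>i. if i \<le> k then x i else x' i) \<in> shift_space m A"
  using assms unfolding shift_space_def
proof (intro CollectI conjI allI)
  fix l :: int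
  consider "l + 1 \<le> k" | "l = k" | "l > k" by linarith
  then show "A ((\<lambda>i. if i \<le> k then x i else x' i) l) ((\<lambda>i. if i \<le> k then x i else x' i) (l + 1)) = 1"
    using assms unfolding shift_space_def by cases auto
qed auto

theorem mainTheorem9:
  fixes m n :: nat and A B :: "nat \<Rightarrow> nat \<Rightarrow> int"
    and \<phi> \<psi> :: "(int \<Rightarrow> nat) \<Rightarrow> (int \<Rightarrow> nat)" and loc locinv :: "nat \<Rightarrow> nat \<Rightarrow> nat"
  assumes "zero_one_matrix m m A" and "zero_one_matrix n n B"
    and "nondegenerate m A" and "nondegenerate n B"
    and "elementary_with m A n B \<phi> \<psi> loc locinv"
  shows "(\<forall>a\<in>{1..m}. \<forall>a''\<in>{1..m}. mat_mult n (R_mat m A loc) (S_mat n B locinv) a a'' = A a a'')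
       \<and> (\<forall>b\<in>{1..n}. \<forall>b''\<in>{1..n}. mat_mult m (S_mat n B locinv) (R_mat m A loc) b b'' = B b b'')"
proof -
  let ?XA = "shift_space m A" and ?XB = "shift_space n B"
  let ?R = "R_mat m A loc" and ?S = "S_mat n B locinv"
  have hom: "homeomorphism ?XA ?XB \<phi> \<psi>" and L: "\<forall>x\<in>?XA. \<forall>i. \<phi> x i = loc (x i) (x (i + 1))"
    and Li: "\<forall>y\<in>?XB. \<forall>i. \<psi> y i = locinv (y (i - 1)) (y i)"
    using assms(5) unfolding elementary_with_def conjugacy_def by auto
  have phiX: "\<phi> x \<in> ?XB" if "x \<in> ?XA" for x using hom that unfolding homeomorphism_def by blast
  have psiX: "\<psi> y \<in> ?XA" if "y \<in> ?XB" for y using hom that unfolding homeomorphism_def by blast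
  have pp: "\<psi> (\<phi> x) = x" if "x \<in> ?XA" for x using hom that unfolding homeomorphism_def by blast
  have pp2: "\<phi> (\<psi> y) = y" if "y \<in> ?XB" for y using hom that unfolding homeomorphism_def by blast
  have inA: "x i \<in> {1..m}" "A (x i) (x (i+1)) = 1" if "x \<in> ?XA" for x i
    using that unfolding shift_space_def by auto
  have inB: "y i \<in> {1..n}" "B (y i) (y (i+1)) = 1" if "y \<in> ?XB" for y i
    using that unfolding shift_space_def by auto
  have R01: "?R a b = 0 \<or> ?R a b = 1" for a b unfolding R_mat_def by auto
  have S01: "?S a b = 0 \<or> ?S a b = 1" for a b unfolding S_mat_def by auto
  have A01: "A a a'' = 0 \<or> A a a'' = 1" if "a \<in> {1..m}" "a'' \<in> {1..m}" for a a''
    using assms(1) that unfolding zero_one_matrix_def by auto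
  have B01: "B a a'' = 0 \<or> B a a'' = 1" if "a \<in> {1..n}" "a'' \<in> {1..n}" for a a''
    using assms(2) that unfolding zero_one_matrix_def by auto

  have key1: "(?R a b = 1 \<and> ?S b a'' = 1) \<longleftrightarrow> (A a a'' = 1 \<and> b = loc a a'')"
    if a: "a \<in> {1..m}" "a'' \<in> {1..m}" for a a'' b
  proof
    assume h: "?R a b = 1 \<and> ?S b a'' = 1"
    then obtain a' where a': "a' \<in> {1..m}" "A a a' = 1" "loc a a' = b"
      unfolding R_mat_def by (auto split: if_splits)
    obtain b' where b': "b' \<in> {1..n}" "B b b' = 1" "locinv b b' = a''"
      using h unfolding S_mat_def by (auto split: if_splits)
    obtain x where x: "x \<in> ?XA" "x 0 = a" "x 1 = a'"
      using ext[OF assms(1,3) a(1) a'(1,2), of 0] by auto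
    define y where "y = \<phi> x"
    have y: "y \<in> ?XB" using phiX x(1) y_def by simp
    have y0: "y 0 = b" using L x a' y_def by (metis add_0)
    obtain y' where y': "y' \<in> ?XB" "y' 0 = b" "y' 1 = b'"
      using ext[OF assms(2,4) _ b'(1,2), of 0] inB(1)[OF y, of 0] y0 by auto
    define z where "z = (\<lambda>i. if i \<le> 0 then y i else y' i)"
    have z: "z \<in> ?XB" unfolding z_def using glue[OF y y'(1)] y0 y'(2) by simp
    define w where "w = \<psi> z"
    have w: "w \<in> ?XA" using psiX z w_def by simp
    have "w 0 = locinv (y (0-1)) (y 0)" using Li z unfolding w_def z_def by simp
    also have "\<dots> = \<psi> y 0" using Li y by simp
    also have "\<dots> = a" using pp x y_def by simp
    finally have w0: "w 0 = a" .
    have w1: "w 1 = a''" using Li z y0 y'(2,3) b'(3) unfolding w_def z_def by simp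
    have "A a a'' = 1" using inA(2)[OF w, of 0] w0 w1 by simp
    moreover have "\<phi> w 0 = z 0" using pp2 z w_def by simp
    then have "loc a a'' = b" using L w w0 w1 z_def y0 by (metis add_0 order_refl)
    ultimately show "A a a'' = 1 \<and> b = loc a a''" by simp
  next
    assume h: "A a a'' = 1 \<and> b = loc a a''"
    obtain x where x: "x \<in> ?XA" "x 0 = a" "x 1 = a''"
      using ext[OF assms(1,3) a h[THEN conjunct1], of 0] by auto
    define y where "y = \<phi> x"
    have y: "y \<in> ?XB" using phiX x(1) y_def by simp
    have y0: "y 0 = b" using L x h y_def by (metis add_0)
    have "?R a b = 1" unfolding R_mat_def using a h by auto
    moreover have "locinv b (y 1) = a''"
      using Li y y0 pp x y_def by (metis diff_self)
    then have "?S b a'' = 1" unfolding S_mat_def using inB[OF y, of 0] inB(1)[OF y, of 1] y0 by auto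
    ultimately show "?R a b = 1 \<and> ?S b a'' = 1" by simp
  qed

  have key2: "(?S b a = 1 \<and> ?R a b'' = 1) \<longleftrightarrow> (B b b'' = 1 \<and> a = locinv b b'')"
    if b: "b \<in> {1..n}" "b'' \<in> {1..n}" for b b'' a
  proof
    assume h: "?S b a = 1 \<and> ?R a b'' = 1"
    then obtain a' where a': "a' \<in> {1..m}" "A a a' = 1" "loc a a' = b''"
      unfolding R_mat_def by (auto split: if_splits)
    obtain b' where b': "b' \<in> {1..n}" "B b b' = 1" "locinv b b' = a"
      using h unfolding S_mat_def by (auto split: if_splits)
    obtain y where y: "y \<in> ?XB" "y 0 = b" "y 1 = b'"
      using ext[OF assms(2,4) b(1) b'(1,2), of 0] by auto
    define x where "x = \<psi> y"
    have x: "x \<in> ?XA" using psiX y(1) x_def by simp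
    have x1: "x 1 = a" using Li y b' x_def by simp
    obtain x' where x': "x' \<in> ?XA" "x' 1 = a" "x' 2 = a'"
      using ext[OF assms(1,3) _ a'(1,2), of 1] inA(1)[OF x, of 1] x1 by auto
    define z where "z = (\<lambda>i. if i \<le> 1 then x i else x' i)"
    have z: "z \<in> ?XA" unfolding z_def using glue[OF x x'(1)] x1 x'(2) by simp
    define w where "w = \<phi> z"
    have w: "w \<in> ?XB" using phiX z w_def by simp
    have "w 0 = loc (x 0) (x (0+1))" using L z unfolding w_def z_def by simp
    also have "\<dots> = \<phi> x 0" using L x by simp
    also have "\<dots> = b" using pp2 y x_def by simp
    finally have w0: "w 0 = b" .
    have "w 1 = loc (z 1) (z (1+1))" using L z w_def by blast
    then have w1: "w 1 = b''" using x1 x'(3) a'(3) unfolding z_def by simp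
    have "B b b'' = 1" using inB(2)[OF w, of 0] w0 w1 by simp
    moreover have "\<psi> w 1 = z 1" using pp z w_def by simp
    then have "locinv b b'' = a" using Li w w0 w1 z_def x1 by (metis diff_self order_refl)
    ultimately show "B b b'' = 1 \<and> a = locinv b b''" by simp
  next
    assume h: "B b b'' = 1 \<and> a = locinv b b''"
    obtain y where y: "y \<in> ?XB" "y 0 = b" "y 1 = b''"
      using ext[OF assms(2,4) b h[THEN conjunct1], of 0] by auto
    define x where "x = \<psi> y"
    have x: "x \<in> ?XA" using psiX y(1) x_def by simp
    have x1: "x 1 = a" using Li y h x_def by simp
    have "?S b a = 1" unfolding S_mat_def using b h by auto
    moreover have "loc a (x (1+1)) = b''"
      using L x x1 pp2 y x_def by metis
    then have "?R a b'' = 1" unfolding R_mat_def using inA[OF x, of 1] inA(1)[OF x, of 2] x1 by auto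
    ultimately show "?S b a = 1 \<and> ?R a b'' = 1" by simp
  qed

  show ?thesis
  proof (intro conjI ballI)
    fix a a'' assume a: "a \<in> {1..m}" "a'' \<in> {1..m}"
    have t: "?R a b * ?S b a'' = (if b = loc a a'' then A a a'' else 0)" if "b \<in> {1..n}" for b
      using key1[OF a, of b] R01[of a b] S01[of b a''] A01[OF a] by auto
    have lin: "A a a'' = 1 \<Longrightarrow> loc a a'' \<in> {1..n}"
    proof -
      assume h: "A a a'' = 1"
      obtain x where x: "x \<in> ?XA" "x 0 = a" "x 1 = a''"
        using ext[OF assms(1,3) a h, of 0] by auto
      show ?thesis using inB(1)[OF phiX[OF x(1)], of 0] L x by (metis add_0)
    qed
    have "mat_mult n ?R ?S a a'' = (\<Sum>b=1..n. if b = loc a a'' then A a a'' else 0)"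
      unfolding mat_mult_def using t by (intro sum.cong) auto
    also have "\<dots> = A a a''" using lin A01[OF a] by (auto simp: sum.delta')
    finally show "mat_mult n ?R ?S a a'' = A a a''" .
  next
    fix b b'' assume b: "b \<in> {1..n}" "b'' \<in> {1..n}"
    have t: "?S b a * ?R a b'' = (if a = locinv b b'' then B b b'' else 0)" if "a \<in> {1..m}" for a
      using key2[OF b, of a] R01[of a b''] S01[of b a] B01[OF b] by auto
    have lin: "B b b'' = 1 \<Longrightarrow> locinv b b'' \<in> {1..m}"
    proof -
      assume h: "B b b'' = 1"
      obtain y where y: "y \<in> ?XB" "y 0 = b" "y 1 = b''"
        using ext[OF assms(2,4) b h, of 0] by auto
      show ?thesis using inA(1)[OF psiX[OF y(1)], of 1] Li y by simp
    qed
    have "mat_mult m ?S ?R b b'' = (\<Sum>a=1..m. if a = locinv b b'' then B b b'' else 0)"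
      unfolding mat_mult_def using t by (intro sum.cong) auto
    also have "\<dots> = B b b''" using lin B01[OF b] by (auto simp: sum.delta')
    finally show "mat_mult m ?S ?R b b'' = B b b''" .
  qed
qed

end
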